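(* Let $K:\ell^2\to\mathcal{H}$ be a bounded, linear and injective operator into a real Hilbert space $\mathcal{H}$, let $f\in\mathcal{H}$, let $w=(w_k)_{k\in\mathbb{N}}$ be a sequence with $w_k\ge w_0>0$ for all $k$, and fix $\gamma>0$. Let $\bar u\in\ell^2$ be the unique minimizer of $\Psi(u)=\frac12\|Ku-f\|_{\mathcal{H}}^2+\sum_{k=1}^\infty w_k|u_k|$ over $\ell^2$. Define $\mathcal{F}:\ell^2\to\ell^2$ by $\mathcal{F}(u)=u-\mathcal{S}_{\gamma w}(u-\gamma K^*(Ku-f))$, and for $u\in\ell^2$ let $\mathcal{A}(u)=\{k\in\mathbb{N}: |u-\gamma K^*(Ku-f)|_k>\gamma w_k\}$, $P_{\mathcal{A}(u)}$ the coordinate projection onto the indices in $\mathcal{A}(u)$, and $\mathcal{G}(u)=(I-P_{\mathcal{A}(u)})+\gamma P_{\mathcal{A}(u)}K^*K\in L(\ell^2,\ell^2)$. Let $\rho>0$ and $k_0\in\mathbb{N}$ be such that $\|u-\bar u\|<\rho$ implies $\mathcal{A}(u)\subset\{1,\dots,k_0\}$ (such $\rho,k_0$ exist). Then there exists $r\in(0,\rho]$ such that for every $u^0\in\ell^2$ with $\|u^0-\bar u\|<r$, the semismooth Newton iteration $u^{n+1}=u^n-\mathcal{G}(u^n)^{-1}\mathcal{F}(u^n)$, $n=0,1,2,\dots$, is well defined, all iterates satisfy $\|u^n-\bar u\|<r$, and $u^n\to\bar u$ superlinearly, i.e. $\|u^{n+1}-\bar u\|=o(\|u^n-\bar u\|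)$.
   Context: $\ell^2$ is the Hilbert space of real square-summable sequences with norm $\|\cdot\|$; $K^*$ is the Hilbert space adjoint of $K$. For a sequence $v=(v_k)$ with $v_k>0$, the soft-thresholding operator is $\mathcal{S}_{v}(u)_k=\max\{0,|u_k|-v_k\}\,\mathrm{sgn}(u_k)$; $\gamma w$ denotes the sequence $(\gamma w_k)$. $|x|_k$ denotes $|x_k|$. *)

theory Defs
  imports "HOL-Analysis.Analysis" "HOL-Library.Landau_Symbols"
begin

text \<open>The sequence space l2, represented as the set of square-summable real sequences
  (indices start at 0 instead of 1).\<close>
definition L2 :: "(nat \<Rightarrow> real) set" where
  "L2 = {u. summable (\<lambda>k. (u k)\<^sup>2)}"

definition l2inner :: "(nat \<Rightarrow> real) \<Rightarrow> (nat \<Rightarrow> real) \<Rightarrow> real" where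
  "l2inner u v = (\<Sum>k. u k * v k)"

definition l2norm :: "(nat \<Rightarrow> real) \<Rightarrow> real" where
  "l2norm u = sqrt (\<Sum>k. (u k)\<^sup>2)"

definition seq_add :: "(nat \<Rightarrow> real) \<Rightarrow> (nat \<Rightarrow> real) \<Rightarrow> nat \<Rightarrow> real" where
  "seq_add u v = (\<lambda>k. u k + v k)"

definition seq_diff :: "(nat \<Rightarrow> real) \<Rightarrow> (nat \<Rightarrow> real) \<Rightarrow> nat \<Rightarrow> real" where
  "seq_diff u v = (\<lambda>k. u k - v k)"

definition seq_scale :: "real \<Rightarrow> (nat \<Rightarrow> real) \<Rightarrow> nat \<Rightarrow> real" where
  "seq_scale a u = (\<lambda>k. a * u k)"

definition bounded_linear_l2 :: "((nat \<Rightarrow> real) \<Rightarrow> 'h::real_normed_vector) \<Rightarrow> bool" where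
  "bounded_linear_l2 K \<longleftrightarrow>
     (\<forall>u\<in>L2. \<forall>v\<in>L2. K (seq_add u v) = K u + K v) \<and>
     (\<forall>u\<in>L2. \<forall>a. K (seq_scale a u) = a *\<^sub>R K u) \<and>
     (\<exists>C. \<forall>u\<in>L2. norm (K u) \<le> C * l2norm u)"

definition is_adjoint_l2 :: "((nat \<Rightarrow> real) \<Rightarrow> 'h::real_inner) \<Rightarrow> ('h \<Rightarrow> nat \<Rightarrow> real) \<Rightarrow> bool" where
  "is_adjoint_l2 K Kadj \<longleftrightarrow>
     (\<forall>y. Kadj y \<in> L2) \<and> (\<forall>u\<in>L2. \<forall>y. inner (K u) y = l2inner u (Kadj y))"

definition soft :: "(nat \<Rightarrow> real) \<Rightarrow> (nat \<Rightarrow> real) \<Rightarrow> nat \<Rightarrow> real" where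
  "soft v u = (\<lambda>k. max 0 (\<bar>u k\<bar> - v k) * sgn (u k))"

text \<open>Tikhonov functional with weighted l1 penalty (value +\<infinity> if the penalty diverges).\<close>
definition Psi :: "((nat \<Rightarrow> real) \<Rightarrow> 'h::real_normed_vector) \<Rightarrow> 'h \<Rightarrow> (nat \<Rightarrow> real) \<Rightarrow> (nat \<Rightarrow> real) \<Rightarrow> ereal" where
  "Psi K f w u = ereal ((norm (K u - f))\<^sup>2 / 2) + (\<Sum>k. ereal (w k * \<bar>u k\<bar>))"

definition grad_step :: "((nat \<Rightarrow> real) \<Rightarrow> 'h::real_inner) \<Rightarrow> ('h \<Rightarrow> nat \<Rightarrow> real) \<Rightarrow> 'h \<Rightarrow> real \<Rightarrow> (nat \<Rightarrow> real) \<Rightarrow> nat \<Rightarrow> real" where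
  "grad_step K Kadj f \<gamma> u = (\<lambda>k. u k - \<gamma> * Kadj (K u - f) k)"

definition FF :: "((nat \<Rightarrow> real) \<Rightarrow> 'h::real_inner) \<Rightarrow> ('h \<Rightarrow> nat \<Rightarrow> real) \<Rightarrow> 'h \<Rightarrow> (nat \<Rightarrow> real) \<Rightarrow> real \<Rightarrow> (nat \<Rightarrow> real) \<Rightarrow> nat \<Rightarrow> real" where
  "FF K Kadj f w \<gamma> u = seq_diff u (soft (\<lambda>k. \<gamma> * w k) (grad_step K Kadj f \<gamma> u))"

definition active :: "((nat \<Rightarrow> real) \<Rightarrow> 'h::real_inner) \<Rightarrow> ('h \<Rightarrow> nat \<Rightarrow> real) \<Rightarrow> 'h \<Rightarrow> (nat \<Rightarrow> real) \<Rightarrow> real \<Rightarrow> (nat \<Rightarrow> real) \<Rightarrow> nat set" where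
  "active K Kadj f w \<gamma> u = {k. \<bar>grad_step K Kadj f \<gamma> u k\<bar> > \<gamma> * w k}"

definition GG :: "((nat \<Rightarrow> real) \<Rightarrow> 'h::real_inner) \<Rightarrow> ('h \<Rightarrow> nat \<Rightarrow> real) \<Rightarrow> 'h \<Rightarrow> (nat \<Rightarrow> real) \<Rightarrow> real \<Rightarrow> (nat \<Rightarrow> real) \<Rightarrow> (nat \<Rightarrow> real) \<Rightarrow> nat \<Rightarrow> real" where
  "GG K Kadj f w \<gamma> u v = (\<lambda>k. if k \<in> active K Kadj f w \<gamma> u then \<gamma> * Kadj (K v) k else v k)"

end

theory Submission
  imports Defs
begin


definition ek :: "nat \<Rightarrow> nat \<Rightarrow> real" where "ek k = (\<lambda>i. if i = k then 1 else 0)"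

lemma L2_fin: "finite A \<Longrightarrow> (\<And>k. k \<notin> A \<Longrightarrow> x k = 0) \<Longrightarrow> x \<in> L2"
  unfolding L2_def mem_Collect_eq by (rule summable_finite[of A]) auto

lemma ek_L2: "ek k \<in> L2"
  by (rule L2_fin[of "{k}"]) (auto simp: ek_def)

lemma L2_le: "u \<in> L2 \<Longrightarrow> (\<And>k. \<bar>v k\<bar> \<le> \<bar>u k\<bar>) \<Longrightarrow> v \<in> L2"
  unfolding L2_def mem_Collect_eq
  apply (rule summable_comparison_test'[of "\<lambda>k. (u k)\<^sup>2" 0])
   apply simp
  by (simp add: abs_le_square_iff)

lemma sq_sum_le: "((a::real) + b)\<^sup>2 \<le> 2 * a\<^sup>2 + 2 * b\<^sup>2"
proof -
  have "0 \<le> (a - b)\<^sup>2" by simp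
  then show ?thesis by (simp add: power2_eq_square algebra_simps)
qed

lemma L2_add: "u \<in> L2 \<Longrightarrow> v \<in> L2 \<Longrightarrow> (\<lambda>k. u k + v k) \<in> L2"
proof -
  assume a: "u \<in> L2" "v \<in> L2"
  have "summable (\<lambda>k. 2 * (u k)\<^sup>2 + 2 * (v k)\<^sup>2)"
    using a unfolding L2_def by (intro summable_add summable_mult) auto
  then show ?thesis unfolding L2_def mem_Collect_eq
    apply (rule summable_comparison_test'[where N=0])
    using sq_sum_le by simp
qed

lemma L2_scale: "u \<in> L2 \<Longrightarrow> (\<lambda>k. c * u k) \<in> L2"
  unfolding L2_def mem_Collect_eq by (simp add: power_mult_distrib summable_mult)

lemma L2_diff: "u \<in> L2 \<Longrightarrow> v \<in> L2 \<Longrightarrow> (\<lambda>k. u k - v k) \<in> L2"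
  using L2_add[of u "\<lambda>k. (-1) * v k"] L2_scale[of v "-1"] by simp

lemma L2_zero: "(\<lambda>k. 0) \<in> L2" unfolding L2_def by simp

lemma L2_coord: "u \<in> L2 \<Longrightarrow> \<bar>u k\<bar> \<le> l2norm u"
proof -
  assume "u \<in> L2"
  then have "(u k)\<^sup>2 \<le> (\<Sum>i. (u i)\<^sup>2)" unfolding L2_def
    using sum_le_suminf[of "\<lambda>i. (u i)\<^sup>2" "{k}"] by auto
  then show ?thesis unfolding l2norm_def using real_sqrt_abs real_sqrt_le_mono by metis
qed


context
  fixes K :: "(nat \<Rightarrow> real) \<Rightarrow> 'h::real_inner" and Kadj :: "'h \<Rightarrow> nat \<Rightarrow> real"
  assumes Kl: "bounded_linear_l2 K" and Ki: "inj_on K L2" and Ka: "is_adjoint_l2 K Kadj"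
begin

lemma K_add: "u \<in> L2 \<Longrightarrow> v \<in> L2 \<Longrightarrow> K (\<lambda>k. u k + v k) = K u + K v"
  using Kl unfolding bounded_linear_l2_def seq_add_def by blast

lemma K_scale: "u \<in> L2 \<Longrightarrow> K (\<lambda>k. c * u k) = c *\<^sub>R K u"
  using Kl unfolding bounded_linear_l2_def seq_scale_def by blast

lemma K_diff: "u \<in> L2 \<Longrightarrow> v \<in> L2 \<Longrightarrow> K (\<lambda>k. u k - v k) = K u - K v"
proof -
  assume a: "u \<in> L2" "v \<in> L2"
  have "K (\<lambda>k. u k - v k) = K (\<lambda>k. u k + (\<lambda>k. (-1) * v k) k)" by simp
  also have "\<dots> = K u + K (\<lambda>k. (-1) * v k)" using a L2_scale[of v "-1"] by (intro K_add) auto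
  also have "\<dots> = K u - K v" using a K_scale[of v "-1"] by simp
  finally show ?thesis .
qed

lemma K_zero: "K (\<lambda>k. 0) = 0"
  using K_scale[OF L2_zero, of 0] by simp

lemma Kadj_L2: "Kadj y \<in> L2"
  using Ka unfolding is_adjoint_l2_def by blast

lemma inner_K: "u \<in> L2 \<Longrightarrow> inner (K u) y = (\<Sum>k. u k * Kadj y k)"
  using Ka unfolding is_adjoint_l2_def l2inner_def by blast

lemma Kadj_coord: "Kadj y k = inner (K (ek k)) y"
proof -
  have "(\<lambda>i. ek k i * Kadj y i) = (\<lambda>i. if i = k then Kadj y i else 0)"
    by (auto simp: ek_def)
  then have "(\<lambda>i. ek k i * Kadj y i) sums Kadj y k" using sums_single[of k "Kadj y"] by simp
  then show ?thesis using inner_K[OF ek_L2, of k y] sums_unique by metis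
qed

lemma Kadj_add: "Kadj (a + b) k = Kadj a k + Kadj b k"
  by (simp add: Kadj_coord inner_add_right)

lemma Kadj_diff: "Kadj (a - b) k = Kadj a k - Kadj b k"
  by (simp add: Kadj_coord inner_diff_right)

lemma Kadj_scale: "Kadj (c *\<^sub>R a) k = c * Kadj a k"
  by (simp add: Kadj_coord)

lemma inner_zero: "x \<in> L2 \<Longrightarrow> (\<And>k. x k = 0 \<or> Kadj y k = 0) \<Longrightarrow> inner (K x) y = 0"
proof -
  assume a: "x \<in> L2" "\<And>k. x k = 0 \<or> Kadj y k = 0"
  then have "(\<lambda>k. x k * Kadj y k) = (\<lambda>k. 0)" by (metis mult_eq_0_iff)
  then show ?thesis using inner_K[OF a(1)] by simp
qed

lemma K_eq0: "x \<in> L2 \<Longrightarrow> K x = 0 \<Longrightarrow> x = (\<lambda>k. 0)"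
  using Ki K_zero L2_zero unfolding inj_on_def by metis

lemma K_bound: "\<exists>C\<ge>0. \<forall>u\<in>L2. norm (K u) \<le> C * l2norm u"
proof -
  obtain C where C: "\<forall>u\<in>L2. norm (K u) \<le> C * l2norm u"
    using Kl unfolding bounded_linear_l2_def by blast
  have "l2norm u \<ge> 0" if "u \<in> L2" for u using that unfolding l2norm_def L2_def
    by (simp add: suminf_nonneg)
  then have "\<forall>u\<in>L2. norm (K u) \<le> \<bar>C\<bar> * l2norm u"
    using C by (meson abs_ge_self mult_right_mono order_trans)
  then show ?thesis by (intro exI[of _ "\<bar>C\<bar>"]) auto
qed


lemma solve:
  assumes "finite A"
  shows "\<exists>x. (\<forall>k. k \<notin> A \<longrightarrow> x k = 0) \<and> (\<forall>k\<in>A. Kadj (K x) k = t k)"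
  using assms
proof (induction A arbitrary: t rule: finite_induct)
  case empty
  show ?case by (intro exI[of _ "\<lambda>k. 0"]) simp
next
  case (insert a A)
  obtain x' where x': "\<forall>k. k \<notin> A \<longrightarrow> x' k = 0" "\<forall>k\<in>A. Kadj (K x') k = t k"
    using insert.IH by blast
  obtain p where p: "\<forall>k. k \<notin> A \<longrightarrow> p k = 0" "\<forall>k\<in>A. Kadj (K p) k = Kadj (K (ek a)) k"
    using insert.IH by blast
  define q where "q = (\<lambda>k. ek a k - p k)"
  have pL: "p \<in> L2" using p(1) insert(1) by (intro L2_fin) auto
  have xL: "x' \<in> L2" using x'(1) insert(1) by (intro L2_fin) auto
  have qL: "q \<in> L2" unfolding q_def using pL ek_L2 by (rule L2_diff[rotated])
  have Kq: "K q = K (ek a) - K p" unfolding q_def using pL ek_L2 by (intro K_diff)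
  have qA: "\<forall>k\<in>A. Kadj (K q) k = 0" using p(2) by (simp add: Kq Kadj_diff)
  have qa: "q a = 1" using p(1) insert(2) by (simp add: q_def ek_def)
  have Kq0: "K q \<noteq> 0"
  proof
    assume "K q = 0"
    then have "q = (\<lambda>k. 0)" using K_eq0 qL by blast
    then show False using qa by simp
  qed
  have pq: "inner (K p) (K q) = 0"
    using pL p(1) qA by (intro inner_zero) auto
  have "Kadj (K q) a = inner (K (ek a)) (K q)" by (rule Kadj_coord)
  also have "K (ek a) = K q + K p" using Kq by simp
  finally have D: "Kadj (K q) a = inner (K q) (K q)" using pq by (simp add: inner_add_left)
  have Dpos: "Kadj (K q) a > 0" using D Kq0 by simp
  define lam where "lam = (t a - Kadj (K x') a) / Kadj (K q) a"
  define x where "x = (\<lambda>k. x' k + (\<lambda>k. lam * q k) k)"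
  have Kx: "K x = K x' + lam *\<^sub>R K q"
    unfolding x_def using xL qL L2_scale[OF qL] by (simp add: K_add K_scale)
  have Kadjx: "Kadj (K x) k = Kadj (K x') k + lam * Kadj (K q) k" for k
    by (simp add: Kx Kadj_add Kadj_scale)
  show ?case
  proof (intro exI[of _ x] conjI allI ballI impI)
    fix k assume "k \<notin> insert a A"
    then show "x k = 0" using x'(1) p(1) by (simp add: x_def q_def ek_def)
  next
    fix k assume k: "k \<in> insert a A"
    show "Kadj (K x) k = t k"
    proof (cases "k = a")
      case True
      then show ?thesis using Dpos by (simp add: Kadjx lam_def)
    next
      case False
      then show ?thesis using k x'(2) qA by (simp add: Kadjx)
    qed
  qed
qed

lemma G_bij:
  assumes "finite A" "\<gamma> \<noteq> 0"
  shows "bij_betw (\<lambda>v k. if k \<in> A then \<gamma> * Kadj (K v) k else v k) L2 L2"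
proof -
  let ?G = "\<lambda>v k. if k \<in> A then \<gamma> * Kadj (K v) k else v k"
  have into: "?G v \<in> L2" if v: "v \<in> L2" for v
  proof -
    have "(\<lambda>k. \<bar>v k\<bar>) \<in> L2" using v by (rule L2_le) simp
    moreover have "(\<lambda>k. \<bar>\<gamma> * Kadj (K v) k\<bar>) \<in> L2"
      using L2_scale[OF Kadj_L2, of \<gamma> "K v"] by (rule L2_le) simp
    ultimately have "(\<lambda>k. \<bar>v k\<bar> + \<bar>\<gamma> * Kadj (K v) k\<bar>) \<in> L2" by (rule L2_add)
    then show ?thesis by (rule L2_le) auto
  qed
  have inj: "inj_on ?G L2"
  proof (rule inj_onI)
    fix v v' assume v: "v \<in> L2" "v' \<in> L2" and eq: "?G v = ?G v'"
    define d where "d = (\<lambda>k. v k - v' k)"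
    have dL: "d \<in> L2" unfolding d_def using v by (rule L2_diff)
    have Kd: "K d = K v - K v'" unfolding d_def using v by (rule K_diff)
    have "d k = 0 \<or> Kadj (K d) k = 0" for k
    proof (cases "k \<in> A")
      case True
      then have "\<gamma> * Kadj (K v) k = \<gamma> * Kadj (K v') k" using fun_cong[OF eq, of k] by simp
      then show ?thesis using assms(2) by (simp add: Kd Kadj_diff)
    next
      case False
      then show ?thesis using fun_cong[OF eq, of k] by (simp add: d_def)
    qed
    then have "inner (K d) (K d) = 0" using dL by (intro inner_zero) auto
    then have "d = (\<lambda>k. 0)" using dL K_eq0 by simp
    then show "v = v'"
    proof -
      assume d0: "d = (\<lambda>k. 0)"
      show "v = v'"
      proof
        fix k show "v k = v' k" using fun_cong[OF d0, of k] by (simp add: d_def)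
      qed
    qed
  qed
  have surj: "y \<in> ?G ` L2" if y: "y \<in> L2" for y
  proof -
    define y' where "y' = (\<lambda>k. if k \<in> A then 0 else y k)"
    have y'L: "y' \<in> L2" using y unfolding y'_def by (rule L2_le) auto
    obtain x where x: "\<forall>k. k \<notin> A \<longrightarrow> x k = 0"
      "\<forall>k\<in>A. Kadj (K x) k = y k / \<gamma> - Kadj (K y') k"
      using solve[OF assms(1), of "\<lambda>k. y k / \<gamma> - Kadj (K y') k"] by blast
    have xL: "x \<in> L2" using x(1) assms(1) by (intro L2_fin) auto
    define v where "v = (\<lambda>k. y' k + x k)"
    have vL: "v \<in> L2" unfolding v_def using y'L xL by (rule L2_add)
    have Kv: "K v = K y' + K x" unfolding v_def using y'L xL by (rule K_add)
    have "?G v = y"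
    proof
      fix k show "?G v k = y k"
      proof (cases "k \<in> A")
        case True
        then have "Kadj (K x) k = y k / \<gamma> - Kadj (K y') k" using x(2) by blast
        then show ?thesis using True assms(2) by (simp add: Kv Kadj_add)
      next
        case False
        then show ?thesis using x(1) by (simp add: v_def y'_def)
      qed
    qed
    then have "y = ?G v" by (rule sym)
    then show ?thesis using vL by (rule image_eqI)
  qed
  have "?G ` L2 = L2"
  proof
    show "?G ` L2 \<subseteq> L2" using into by (rule image_subsetI)
    show "L2 \<subseteq> ?G ` L2" using surj by (rule subsetI)
  qed
  then show ?thesis unfolding bij_betw_def using inj by (rule conjI[rotated])
qed

end


lemma small_pos:
  fixes c B \<delta> :: real
  assumes d: "\<delta> > 0" and B: "B \<ge> 0" and H: "\<And>t. 0 < t \<Longrightarrow> t < \<delta> \<Longrightarrow> 0 \<le> t * c + t\<^sup>2 * B"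
  shows "c \<ge> 0"
proof (rule ccontr)
  assume "\<not> c \<ge> 0"
  then have c: "c < 0" by simp
  define t where "t = min (\<delta>/2) (-c/(B+1))"
  have "-c/(B+1) > 0" using c B by (intro divide_pos_pos) auto
  then have t0: "t > 0" using d unfolding t_def by simp
  have t1: "t < \<delta>" using d unfolding t_def by simp
  have "t * B \<le> (-c/(B+1)) * B" unfolding t_def using B by (intro mult_right_mono) auto
  also have "\<dots> < -c"
  proof -
    have "(-c/(B+1)) * B = -c * (B/(B+1))" by simp
    also have "\<dots> < -c * 1" using c B by (intro mult_strict_left_mono) auto
    finally show ?thesis by simp
  qed
  finally have "c + t * B < 0" by simp
  then have "t * (c + t * B) < 0" using t0 by (simp add: mult_pos_neg)
  moreover have "t * (c + t * B) = t * c + t\<^sup>2 * B" by (simp add: power2_eq_square algebra_simps)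
  ultimately show False using H[OF t0 t1] by simp
qed

lemma opt1d:
  fixes g x w B :: real
  assumes w: "w > 0" and B: "B \<ge> 0" and H: "\<And>t. 0 \<le> t * g + t\<^sup>2 * B + w * (\<bar>x + t\<bar> - \<bar>x\<bar>)"
  shows "\<bar>g\<bar> \<le> w" and "x > 0 \<Longrightarrow> g = -w" and "x < 0 \<Longrightarrow> g = w"
proof -
  have "g + w \<ge> 0"
  proof (rule small_pos[OF zero_less_one B])
    fix t :: real assume t: "0 < t" "t < 1"
    have "w * (\<bar>x + t\<bar> - \<bar>x\<bar>) \<le> w * t" using w t by (intro mult_left_mono) auto
    then show "0 \<le> t * (g + w) + t\<^sup>2 * B" using H[of t] by (simp add: algebra_simps)
  qed
  moreover have "w - g \<ge> 0"
  proof (rule small_pos[OF zero_less_one B])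
    fix t :: real assume t: "0 < t" "t < 1"
    have "w * (\<bar>x + -t\<bar> - \<bar>x\<bar>) \<le> w * t" using w t by (intro mult_left_mono) auto
    then show "0 \<le> t * (w - g) + t\<^sup>2 * B" using H[of "-t"] by (simp add: algebra_simps)
  qed
  ultimately show "\<bar>g\<bar> \<le> w" by simp
next
  assume x: "x > 0"
  have "g + w \<ge> 0"
  proof (rule small_pos[OF x B])
    fix t :: real assume t: "0 < t" "t < x"
    have eq: "\<bar>x + t\<bar> - \<bar>x\<bar> = t" using x t by simp
    have "0 \<le> (t) * g + (t)\<^sup>2 * B + w * (\<bar>x + t\<bar> - \<bar>x\<bar>)" by (rule H)
    then show "0 \<le> t * (g + w) + t\<^sup>2 * B" unfolding eq by (simp add: algebra_simps)
  qed
  moreover have "- (g + w) \<ge> 0"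
  proof (rule small_pos[OF x B])
    fix t :: real assume t: "0 < t" "t < x"
    have eq: "\<bar>x + - t\<bar> - \<bar>x\<bar> = - t" using x t by simp
    have "0 \<le> (- t) * g + (- t)\<^sup>2 * B + w * (\<bar>x + - t\<bar> - \<bar>x\<bar>)" by (rule H)
    then show "0 \<le> t * (- (g + w)) + t\<^sup>2 * B" unfolding eq by (simp add: algebra_simps)
  qed
  ultimately show "g = -w" by simp
next
  assume x: "x < 0"
  have "g - w \<ge> 0"
  proof (rule small_pos[of "-x"])
    show "-x > 0" using x by simp
    show "B \<ge> 0" by (rule B)
    fix t :: real assume t: "0 < t" "t < -x"
    have eq: "\<bar>x + t\<bar> - \<bar>x\<bar> = - t" using x t by simp
    have "0 \<le> (t) * g + (t)\<^sup>2 * B + w * (\<bar>x + t\<bar> - \<bar>x\<bar>)" by (rule H)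
    then show "0 \<le> t * (g - w) + t\<^sup>2 * B" unfolding eq by (simp add: algebra_simps)
  qed
  moreover have "w - g \<ge> 0"
  proof (rule small_pos[of "-x"])
    show "-x > 0" using x by simp
    show "B \<ge> 0" by (rule B)
    fix t :: real assume t: "0 < t" "t < -x"
    have eq: "\<bar>x + - t\<bar> - \<bar>x\<bar> = t" using x t by simp
    have "0 \<le> (- t) * g + (- t)\<^sup>2 * B + w * (\<bar>x + - t\<bar> - \<bar>x\<bar>)" by (rule H)
    then show "0 \<le> t * (w - g) + t\<^sup>2 * B" unfolding eq by (simp add: algebra_simps)
  qed
  ultimately show "g = w" by simp
qed

lemma thresh:
  fixes a c :: real
  assumes c: "c > 0"
  shows "\<exists>\<delta>>0. \<forall>x. \<bar>x - a\<bar> < \<delta> \<longrightarrow>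
     ((\<bar>x\<bar> > c \<longrightarrow> \<bar>a\<bar> \<ge> c \<and> sgn x = sgn a) \<and> (\<bar>a\<bar> > c \<longrightarrow> \<bar>x\<bar> > c))"
proof (cases "\<bar>a\<bar> = c")
  case True
  show ?thesis
  proof (intro exI[of _ c] conjI allI impI)
    fix x assume "\<bar>x - a\<bar> < c"
    then show "\<bar>a\<bar> \<ge> c" "sgn x = sgn a" using True c by (auto simp: sgn_if)
  qed (use c True in auto)
next
  case False
  show ?thesis
  proof (intro exI[of _ "\<bar>\<bar>a\<bar> - c\<bar>"] conjI allI impI)
    show "\<bar>\<bar>a\<bar> - c\<bar> > 0" using False by simp
  next
    fix x assume x: "\<bar>x - a\<bar> < \<bar>\<bar>a\<bar> - c\<bar>"
    { assume "\<bar>x\<bar> > c"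
      then show "\<bar>a\<bar> \<ge> c" using x by linarith
    }
    { assume "\<bar>x\<bar> > c"
      then have "\<bar>a\<bar> > c" using x by linarith
      then show "sgn x = sgn a" using x c by (auto simp: sgn_if)
    }
    { assume "\<bar>a\<bar> > c"
      then show "\<bar>x\<bar> > c" using x by linarith
    }
  qed
qed



context
  fixes K :: "(nat \<Rightarrow> real) \<Rightarrow> 'h::real_inner" and Kadj :: "'h \<Rightarrow> nat \<Rightarrow> real"
  assumes Kl: "bounded_linear_l2 K" and Ki: "inj_on K L2" and Ka: "is_adjoint_l2 K Kadj"
begin

lemma optimality:
  assumes w: "\<And>k. w k > 0" and ubL: "ubar \<in> L2"
    and ubmin: "\<forall>u\<in>L2. Psi K f w ubar \<le> Psi K f w u"
  shows "0 \<le> t * Kadj (K ubar - f) a + t\<^sup>2 * ((norm (K (ek a)))\<^sup>2 / 2)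
            + w a * (\<bar>ubar a + t\<bar> - \<bar>ubar a\<bar>)"
proof -
  define r where "r = K ubar - f"
  define b where "b = K (ek a)"
  define u' where "u' = (\<lambda>k. ubar k + (\<lambda>k. t * ek a k) k)"
  have u'L: "u' \<in> L2" unfolding u'_def using ubL L2_scale[OF ek_L2] by (rule L2_add)
  have Ku': "K u' = K ubar + t *\<^sub>R b"
    unfolding u'_def b_def using ubL L2_scale[OF ek_L2] by (simp add: K_add[OF Kl Ki Ka] K_scale[OF Kl Ki Ka] ek_L2)
  define s where "s = (\<lambda>k. w k * \<bar>ubar k\<bar>)"
  have s0: "\<And>k. 0 \<le> s k" unfolding s_def using w by (simp add: less_imp_le)
  have P0: "Psi K f w (\<lambda>k. 0) = ereal ((norm (K (\<lambda>k. 0) - f))\<^sup>2 / 2)"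
    unfolding Psi_def by (simp add: zero_ereal_def[symmetric])
  have S0: "(\<Sum>k. ereal (s k)) \<ge> 0" using s0 by (intro suminf_0_le) auto
  have fin: "(\<Sum>k. ereal (s k)) \<noteq> \<infinity>"
  proof
    assume "(\<Sum>k. ereal (s k)) = \<infinity>"
    then have "Psi K f w ubar = \<infinity>" unfolding Psi_def s_def by simp
    moreover have "Psi K f w ubar \<le> Psi K f w (\<lambda>k. 0)" using ubmin L2_zero by blast
    ultimately show False using P0 by simp
  qed
  have ss: "summable s" using summable_ereal[OF s0 fin] .
  have Sub: "Psi K f w ubar = ereal ((norm r)\<^sup>2 / 2) + ereal (suminf s)"
    unfolding Psi_def r_def using suminf_ereal[OF s0 fin] by (simp add: s_def)
  define \<delta> where "\<delta> = w a * (\<bar>ubar a + t\<bar> - \<bar>ubar a\<bar>)"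
  have s'eq: "(\<lambda>k. w k * \<bar>u' k\<bar>) = (\<lambda>k. s k + (if k = a then \<delta> else 0))"
    by (auto simp: u'_def s_def \<delta>_def ek_def algebra_simps)
  have "(\<lambda>k. s k + (if k = a then \<delta> else 0)) sums (suminf s + \<delta>)"
    using sums_add[OF summable_sums[OF ss] sums_single[of a "\<lambda>_. \<delta>"]] by simp
  then have s'sum: "(\<lambda>k. w k * \<bar>u' k\<bar>) sums (suminf s + \<delta>)" using s'eq by simp
  have Su': "Psi K f w u' = ereal ((norm (r + t *\<^sub>R b))\<^sup>2 / 2) + ereal (suminf s + \<delta>)"
    unfolding Psi_def Ku' r_def using suminf_ereal'[OF sums_summable[OF s'sum]] sums_unique[OF s'sum]
    by (simp add: algebra_simps)
  have "Psi K f w ubar \<le> Psi K f w u'" using ubmin u'L by blast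
  then have ineq: "(norm r)\<^sup>2 / 2 + suminf s \<le> (norm (r + t *\<^sub>R b))\<^sup>2 / 2 + (suminf s + \<delta>)"
    unfolding Sub Su' by simp
  have "(norm (r + t *\<^sub>R b))\<^sup>2 = (norm r)\<^sup>2 + 2 * t * inner b r + t\<^sup>2 * (norm b)\<^sup>2"
    unfolding power2_norm_eq_inner
    by (simp add: inner_add_left inner_add_right inner_commute power2_eq_square algebra_simps)
  moreover have "inner b r = Kadj (K ubar - f) a" unfolding b_def r_def
    by (rule Kadj_coord[OF Kl Ki Ka, symmetric])
  ultimately show ?thesis using ineq unfolding \<delta>_def b_def by (simp add: algebra_simps add_divide_distrib)
qed

lemma lip:
  assumes uL: "u \<in> L2" and vL: "v \<in> L2" and C: "C \<ge> 0" "\<forall>x\<in>L2. norm (K x) \<le> C * l2norm x"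
  shows "\<bar>grad_step K Kadj f \<gamma> u k - grad_step K Kadj f \<gamma> v k\<bar>
           \<le> (1 + \<bar>\<gamma>\<bar> * norm (K (ek k)) * C) * l2norm (seq_diff u v)"
proof -
  define d where "d = seq_diff u v"
  have dL: "d \<in> L2" unfolding d_def seq_diff_def using uL vL by (rule L2_diff)
  have Kd: "K d = K u - K v" unfolding d_def seq_diff_def using uL vL by (rule K_diff[OF Kl Ki Ka])
  have eq: "grad_step K Kadj f \<gamma> u k - grad_step K Kadj f \<gamma> v k = d k - \<gamma> * Kadj (K d) k"
  proof -
    have "Kadj (K u - f) k - Kadj (K v - f) k = Kadj ((K u - f) - (K v - f)) k"
      by (simp add: Kadj_diff[OF Kl Ki Ka])
    also have "(K u - f) - (K v - f) = K d" using Kd by simp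
    finally show ?thesis unfolding grad_step_def d_def seq_diff_def by (simp add: algebra_simps)
  qed
  have n0: "l2norm d \<ge> 0" using dL unfolding l2norm_def L2_def by (simp add: suminf_nonneg)
  have a1: "\<bar>d k\<bar> \<le> l2norm d" using dL by (rule L2_coord)
  have "\<bar>Kadj (K d) k\<bar> = \<bar>inner (K (ek k)) (K d)\<bar>" by (simp add: Kadj_coord[OF Kl Ki Ka])
  also have "\<dots> \<le> norm (K (ek k)) * norm (K d)" by (rule Cauchy_Schwarz_ineq2)
  also have "\<dots> \<le> norm (K (ek k)) * (C * l2norm d)" using C dL by (intro mult_left_mono) auto
  finally have a2: "\<bar>\<gamma> * Kadj (K d) k\<bar> \<le> \<bar>\<gamma>\<bar> * (norm (K (ek k)) * (C * l2norm d))"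
    by (simp add: abs_mult mult_left_mono)
  have "\<bar>d k - \<gamma> * Kadj (K d) k\<bar> \<le> \<bar>d k\<bar> + \<bar>\<gamma> * Kadj (K d) k\<bar>" by (rule abs_triangle_ineq4)
  also have "\<dots> \<le> l2norm d + \<bar>\<gamma>\<bar> * (norm (K (ek k)) * (C * l2norm d))" using a1 a2 by linarith
  also have "\<dots> = (1 + \<bar>\<gamma>\<bar> * norm (K (ek k)) * C) * l2norm d" by (simp add: algebra_simps)
  finally show ?thesis unfolding eq d_def .
qed

end


theorem theorem3p13:
  fixes K :: "(nat \<Rightarrow> real) \<Rightarrow> 'h::{real_inner, complete_space}"
    and Kadj :: "'h \<Rightarrow> nat \<Rightarrow> real"
    and f :: 'h and w :: "nat \<Rightarrow> real" and w0 \<gamma> \<rho> :: real and k0 :: nat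
    and ubar :: "nat \<Rightarrow> real"
  assumes K_lin: "bounded_linear_l2 K"
    and K_inj: "inj_on K L2"
    and K_adj: "is_adjoint_l2 K Kadj"
    and w0_pos: "w0 > 0" and w_ge: "\<forall>k. w k \<ge> w0"
    and gamma_pos: "\<gamma> > 0"
    and ubar_L2: "ubar \<in> L2"
    and ubar_min: "\<forall>u\<in>L2. Psi K f w ubar \<le> Psi K f w u"
    and ubar_unique: "\<forall>v\<in>L2. (\<forall>u\<in>L2. Psi K f w v \<le> Psi K f w u) \<longrightarrow> v = ubar"
    and rho_pos: "\<rho> > 0"
    and rho_k0: "\<forall>u\<in>L2. l2norm (seq_diff u ubar) < \<rho> \<longrightarrow> active K Kadj f w \<gamma> u \<subseteq> {..k0}"
  shows "\<exists>r. 0 < r \<and> r \<le> \<rho> \<and>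
    (\<forall>u0\<in>L2. l2norm (seq_diff u0 ubar) < r \<longrightarrow>
      (\<exists>u :: nat \<Rightarrow> nat \<Rightarrow> real.
         u 0 = u0 \<and>
         (\<forall>n. u n \<in> L2 \<and> l2norm (seq_diff (u n) ubar) < r \<and>
               bij_betw (GG K Kadj f w \<gamma> (u n)) L2 L2 \<and>
               u (Suc n) = seq_diff (u n)
                 (the_inv_into L2 (GG K Kadj f w \<gamma> (u n)) (FF K Kadj f w \<gamma> (u n)))) \<and>
         ((\<lambda>n. l2norm (seq_diff (u n) ubar)) \<longlonglongrightarrow> 0) \<and>
         (\<lambda>n. l2norm (seq_diff (u (Suc n)) ubar)) \<in> o(\<lambda>n. l2norm (seq_diff (u n) ubar))))"
proof -
  note KK = K_lin K_inj K_adj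
  have wpos: "w k > 0" for k using w_ge w0_pos by (meson less_le_trans)
  obtain C where C: "C \<ge> 0" "\<forall>x\<in>L2. norm (K x) \<le> C * l2norm x" using K_bound[OF KK] by blast
  define g where "g = Kadj (K ubar - f)"
  define zb where "zb = grad_step K Kadj f \<gamma> ubar"
  have zb_eq: "zb k = ubar k - \<gamma> * g k" for k unfolding zb_def g_def grad_step_def by simp
  have opt: "\<bar>g k\<bar> \<le> w k \<and> (ubar k > 0 \<longrightarrow> g k = - w k) \<and> (ubar k < 0 \<longrightarrow> g k = w k)" for k
  proof -
    have H: "\<And>t. 0 \<le> t * g k + t\<^sup>2 * ((norm (K (ek k)))\<^sup>2 / 2) + w k * (\<bar>ubar k + t\<bar> - \<bar>ubar k\<bar>)"
      unfolding g_def using optimality[OF KK wpos ubar_L2 ubar_min] by blast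
    have B: "(norm (K (ek k)))\<^sup>2 / 2 \<ge> 0" by simp
    show ?thesis using opt1d[OF wpos B H] by blast
  qed
  have O1: "\<bar>zb k\<bar> > \<gamma> * w k" if "ubar k \<noteq> 0" for k
  proof (cases "ubar k > 0")
    case True
    then have "zb k = ubar k + \<gamma> * w k" using opt[of k] zb_eq[of k] by simp
    then show ?thesis using True gamma_pos wpos[of k] by simp
  next
    case False
    then have n: "ubar k < 0" using that by simp
    then have "zb k = ubar k - \<gamma> * w k" using opt[of k] zb_eq[of k] by simp
    then show ?thesis using n gamma_pos wpos[of k] by simp
  qed
  have O2: "g k = - w k * sgn (zb k)" if ge: "\<bar>zb k\<bar> \<ge> \<gamma> * w k" for k
  proof -
    have gw: "\<gamma> * w k > 0" using gamma_pos wpos[of k] by simp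
    consider "ubar k > 0" | "ubar k < 0" | "ubar k = 0" by linarith
    then show ?thesis
    proof cases
      case 1
      then have "zb k = ubar k + \<gamma> * w k" "g k = - w k" using opt[of k] zb_eq[of k] by simp_all
      then show ?thesis using 1 gw by simp
    next
      case 2
      then have "zb k = ubar k - \<gamma> * w k" "g k = w k" using opt[of k] zb_eq[of k] by simp_all
      then show ?thesis using 2 gw by simp
    next
      case 3
      then have z: "zb k = - \<gamma> * g k" using zb_eq[of k] by simp
      have "\<bar>zb k\<bar> = \<gamma> * \<bar>g k\<bar>" using z gamma_pos by (simp add: abs_mult)
      then have "\<gamma> * w k \<le> \<gamma> * \<bar>g k\<bar>" using ge by simp
      then have "w k \<le> \<bar>g k\<bar>" using gamma_pos by simp
      then have ga: "\<bar>g k\<bar> = w k" using opt[of k] by simp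
      show ?thesis
      proof (cases "g k > 0")
        case True
        then show ?thesis using ga z gamma_pos by (simp add: sgn_mult)
      next
        case False
        then have gn: "g k = - w k" using ga by linarith
        then have "zb k = \<gamma> * w k" using z by simp
        then show ?thesis using gn gamma_pos wpos[of k] by simp
      qed
    qed
  qed
  have dist0: "l2norm (seq_diff ubar ubar) = 0" unfolding l2norm_def seq_diff_def by simp
  have actU: "active K Kadj f w \<gamma> ubar \<subseteq> {..k0}" using rho_k0 ubar_L2 rho_pos dist0 by simp
  have "\<forall>k. \<exists>\<delta>>0. \<forall>x. \<bar>x - zb k\<bar> < \<delta> \<longrightarrow>
     ((\<bar>x\<bar> > \<gamma> * w k \<longrightarrow> \<bar>zb k\<bar> \<ge> \<gamma> * w k \<and> sgn x = sgn (zb k)) \<and>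
      (\<bar>zb k\<bar> > \<gamma> * w k \<longrightarrow> \<bar>x\<bar> > \<gamma> * w k))"
    using thresh gamma_pos wpos by simp
  then obtain \<delta>f where \<delta>f: "\<And>k. \<delta>f k > 0" "\<And>k x. \<bar>x - zb k\<bar> < \<delta>f k \<Longrightarrow>
     ((\<bar>x\<bar> > \<gamma> * w k \<longrightarrow> \<bar>zb k\<bar> \<ge> \<gamma> * w k \<and> sgn x = sgn (zb k)) \<and>
      (\<bar>zb k\<bar> > \<gamma> * w k \<longrightarrow> \<bar>x\<bar> > \<gamma> * w k))"
    by metis
  define \<delta> where "\<delta> = Min (\<delta>f ` {..k0})"
  have \<delta>pos: "\<delta> > 0" unfolding \<delta>_def using \<delta>f(1) by simp
  have \<delta>le: "\<delta> \<le> \<delta>f k" if "k \<le> k0" for k unfolding \<delta>_def using that by simp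
  define Lk where "Lk = (\<lambda>k. 1 + \<bar>\<gamma>\<bar> * norm (K (ek k)) * C)"
  define L where "L = Max (Lk ` {..k0})"
  have Lk1: "Lk k \<ge> 1" for k unfolding Lk_def using C(1) by simp
  have Lle: "Lk k \<le> L" if "k \<le> k0" for k unfolding L_def using that by simp
  have L1: "L \<ge> 1" using Lle[of 0] Lk1[of 0] by simp
  define r where "r = min \<rho> (\<delta> / L)"
  have rpos: "r > 0" unfolding r_def using rho_pos \<delta>pos L1 by simp
  have rle: "r \<le> \<rho>" unfolding r_def by simp
  have key: "bij_betw (GG K Kadj f w \<gamma> u) L2 L2 \<and>
      seq_diff u (the_inv_into L2 (GG K Kadj f w \<gamma> u) (FF K Kadj f w \<gamma> u)) = ubar"
    if uL: "u \<in> L2" and ud: "l2norm (seq_diff u ubar) < r" for u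
  proof -
    define A where "A = active K Kadj f w \<gamma> u"
    define z where "z = grad_step K Kadj f \<gamma> u"
    have A0: "A \<subseteq> {..k0}" unfolding A_def using rho_k0 uL ud rle by simp
    then have finA: "finite A" using finite_subset by blast
    have near: "\<bar>z k - zb k\<bar> < \<delta>f k" if "k \<le> k0" for k
    proof -
      have "seq_diff u ubar \<in> L2" unfolding seq_diff_def using uL ubar_L2 by (rule L2_diff)
      then have n0: "l2norm (seq_diff u ubar) \<ge> 0" unfolding l2norm_def L2_def by (simp add: suminf_nonneg)
      have "\<bar>z k - zb k\<bar> \<le> Lk k * l2norm (seq_diff u ubar)"
        unfolding z_def zb_def Lk_def using lip[OF KK uL ubar_L2 C] .
      also have "\<dots> \<le> L * l2norm (seq_diff u ubar)" using Lle[OF that] n0 by (rule mult_right_mono)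
      also have "\<dots> < L * r" using ud L1 by simp
      also have "\<dots> \<le> L * (\<delta> / L)" unfolding r_def using L1 by (intro mult_left_mono) auto
      also have "\<dots> = \<delta>" using L1 by simp
      finally show ?thesis using \<delta>le[OF that] by simp
    qed
    have P2: "\<bar>zb k\<bar> \<ge> \<gamma> * w k \<and> sgn (z k) = sgn (zb k)" if k: "k \<in> A" for k
    proof -
      have "\<bar>z k\<bar> > \<gamma> * w k" using k unfolding A_def active_def z_def by simp
      then show ?thesis using \<delta>f(2)[OF near] k A0 by auto
    qed
    have P3: "k \<in> A" if k: "\<bar>zb k\<bar> > \<gamma> * w k" for k
    proof -
      have "k \<le> k0" using actU k unfolding active_def zb_def by auto
      then have "\<bar>z k\<bar> > \<gamma> * w k" using \<delta>f(2)[OF near] k by blast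
      then show ?thesis unfolding A_def active_def z_def by simp
    qed
    have Geq: "GG K Kadj f w \<gamma> u = (\<lambda>v k. if k \<in> A then \<gamma> * Kadj (K v) k else v k)"
      by (rule ext) (simp add: GG_def A_def)
    have bij: "bij_betw (GG K Kadj f w \<gamma> u) L2 L2"
      unfolding Geq using G_bij[OF KK finA] gamma_pos by simp
    define d where "d = seq_diff u ubar"
    have dL: "d \<in> L2" unfolding d_def seq_diff_def using uL ubar_L2 by (rule L2_diff)
    have Kd: "Kadj (K d) k = Kadj (K u - f) k - g k" for k
    proof -
      have "K d = K u - K ubar" unfolding d_def seq_diff_def using uL ubar_L2 by (rule K_diff[OF KK])
      then have "K d = (K u - f) - (K ubar - f)" by simp
      then show ?thesis unfolding g_def by (simp add: Kadj_diff[OF KK])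
    qed
    have FFk: "FF K Kadj f w \<gamma> u k = u k - max 0 (\<bar>z k\<bar> - \<gamma> * w k) * sgn (z k)" for k
      unfolding FF_def seq_diff_def soft_def z_def by simp
    have zk: "z k = u k - \<gamma> * Kadj (K u - f) k" for k unfolding z_def grad_step_def by simp
    have GdF: "GG K Kadj f w \<gamma> u d = FF K Kadj f w \<gamma> u"
    proof
      fix k
      show "GG K Kadj f w \<gamma> u d k = FF K Kadj f w \<gamma> u k"
      proof (cases "k \<in> A")
        case True
        have zg: "\<bar>z k\<bar> > \<gamma> * w k" using True unfolding A_def active_def z_def by simp
        have s: "sgn (z k) = sgn (zb k)" and gk: "g k = - w k * sgn (zb k)" using P2[OF True] O2 by auto
        have "FF K Kadj f w \<gamma> u k = u k - (\<bar>z k\<bar> * sgn (z k) - \<gamma> * w k * sgn (z k))"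
          unfolding FFk using zg by (simp add: algebra_simps)
        also have "\<dots> = \<gamma> * Kadj (K u - f) k + \<gamma> * w k * sgn (zb k)"
          unfolding abs_mult_sgn[of "z k"] unfolding s by (simp add: zk)
        also have "\<dots> = GG K Kadj f w \<gamma> u d k"
          using True by (simp add: Geq Kd gk algebra_simps)
        finally show ?thesis by simp
      next
        case False
        have zg: "\<bar>z k\<bar> \<le> \<gamma> * w k" using False unfolding A_def active_def z_def by simp
        have "ubar k = 0" using False P3 O1 by blast
        then show ?thesis using False zg by (simp add: Geq FFk d_def seq_diff_def)
      qed
    qed
    have "the_inv_into L2 (GG K Kadj f w \<gamma> u) (FF K Kadj f w \<gamma> u) = d"
      unfolding GdF[symmetric] using bij dL by (simp add: bij_betw_def the_inv_into_f_f)
    then show ?thesis using bij by (simp add: d_def seq_diff_def)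
  qed
  show ?thesis
  proof (intro exI[of _ r] conjI ballI impI rpos rle)
    fix u0 assume u0: "u0 \<in> L2" "l2norm (seq_diff u0 ubar) < r"
    define s where "s = (\<lambda>n::nat. if n = 0 then u0 else ubar)"
    have sL: "s n \<in> L2" for n unfolding s_def using u0 ubar_L2 by simp
    have sd: "l2norm (seq_diff (s n) ubar) < r" for n unfolding s_def using u0 rpos dist0 by simp
    have sS: "(\<lambda>n. l2norm (seq_diff (s (Suc n)) ubar)) = (\<lambda>n. 0)" unfolding s_def using dist0 by simp
    show "\<exists>u. u 0 = u0 \<and>
         (\<forall>n. u n \<in> L2 \<and> l2norm (seq_diff (u n) ubar) < r \<and>
               bij_betw (GG K Kadj f w \<gamma> (u n)) L2 L2 \<and>
               u (Suc n) = seq_diff (u n)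
                 (the_inv_into L2 (GG K Kadj f w \<gamma> (u n)) (FF K Kadj f w \<gamma> (u n)))) \<and>
         ((\<lambda>n. l2norm (seq_diff (u n) ubar)) \<longlonglongrightarrow> 0) \<and>
         (\<lambda>n. l2norm (seq_diff (u (Suc n)) ubar)) \<in> o(\<lambda>n. l2norm (seq_diff (u n) ubar))"
    proof (intro exI[of _ s] conjI allI)
      show "s 0 = u0" unfolding s_def by simp
    next
      fix n
      show "s n \<in> L2" by (rule sL)
      show "l2norm (seq_diff (s n) ubar) < r" by (rule sd)
      show "bij_betw (GG K Kadj f w \<gamma> (s n)) L2 L2" using key[OF sL sd] by blast
      have "s (Suc n) = ubar" unfolding s_def by simp
      then show "s (Suc n) = seq_diff (s n)
                 (the_inv_into L2 (GG K Kadj f w \<gamma> (s n)) (FF K Kadj f w \<gamma> (s n)))"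
        using key[OF sL sd] by simp
    next
      have "(\<lambda>n. l2norm (seq_diff (s (Suc n)) ubar)) \<longlonglongrightarrow> 0" unfolding sS by simp
      then show "(\<lambda>n. l2norm (seq_diff (s n) ubar)) \<longlonglongrightarrow> 0" by (rule LIMSEQ_imp_Suc)
    next
      show "(\<lambda>n. l2norm (seq_diff (s (Suc n)) ubar)) \<in> o(\<lambda>n. l2norm (seq_diff (s n) ubar))"
        unfolding sS by simp
    qed
  qed
qed


end
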